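(* Let $\mathbf{k}$ be an algebraically closed field of characteristic zero, $\mathcal{A}=\mathbf{k}[x_1,\ldots,x_n]$, and let $\mathcal{L}_+$ be the Lie algebra of polynomial vector fields on $\mathbb{A}^n$ vanishing at the origin. Let $U$ be a finite-dimensional $\mathbf{k}$-vector space and let $\rho$ be an $\mathcal{A}$-linear representation of $\mathcal{L}_+$ on $\mathcal{A}\otimes_{\mathbf{k}}U$. Then for each $i\in\{1,\ldots,n\}$ there are only finitely many $k\in\mathbb{Z}^n_{\geq0}\setminus\{0\}$ for which $\rho\left(x^k\frac{\partial}{\partial x_i}\right)\neq 0$.
   Context: $\mathcal{L}_+$ is spanned by $x^k\frac{\partial}{\partial x_i}$ with $k\in\mathbb{Z}^n_{\ge0}\setminus\{0\}$, where $x^k=x_1^{k_1}\cdots x_n^{k_n}$. An $\mathcal{A}$-linear representation of $\mathcal{L}_+$ on $\mathcal{A}\otimes U$ is a Lie algebra homomorphism $\rho:\mathcal{L}_+\to\mathrm{End}_{\mathcal{A}}(\mathcal{A}\otimes U)$. *)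

theory Defs
  imports "HOL-Library.Poly_Mapping" "HOL-Computational_Algebra.Polynomial"
begin

text \<open>Multivariate polynomials k[x_i : i in 'n] as finitely supported maps from
 exponent vectors ('n =>0 nat) to coefficients.\<close>
type_synonym ('n, 'k) mpoly = "('n \<Rightarrow>\<^sub>0 nat) \<Rightarrow>\<^sub>0 'k"

definition alg_closed_field :: "'k::field itself \<Rightarrow> bool" where
  "alg_closed_field _ \<longleftrightarrow> (\<forall>p :: 'k poly. Polynomial.degree p \<noteq> 0 \<longrightarrow> (\<exists>x. poly p x = 0))"

definition mconst :: "'k::zero \<Rightarrow> ('n, 'k) mpoly" where
  "mconst c = Poly_Mapping.single 0 c"

definition pderiv_var :: "'n \<Rightarrow> ('n, 'k::comm_ring_1) mpoly \<Rightarrow> ('n, 'k) mpoly" where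
  "pderiv_var i p = (\<Sum>m\<in>Poly_Mapping.keys p.
      Poly_Mapping.single (m - Poly_Mapping.single i 1) (of_nat (Poly_Mapping.lookup m i) * Poly_Mapping.lookup p m))"

text \<open>Polynomial vector fields sum_i X_i d/dx_i, represented by their coefficient
  functions X :: 'n => polynomial.\<close>
type_synonym ('n, 'k) vfield = "'n \<Rightarrow> ('n, 'k) mpoly"

definition vf_bracket :: "('n::finite, 'k::comm_ring_1) vfield \<Rightarrow> ('n, 'k) vfield \<Rightarrow> ('n, 'k) vfield" where
  "vf_bracket X Y = (\<lambda>j. \<Sum>i\<in>UNIV. X i * pderiv_var i (Y j) - Y i * pderiv_var i (X j))"

definition Lplus :: "('n::finite, 'k::comm_ring_1) vfield set" where
  "Lplus = {X. \<forall>i. Poly_Mapping.lookup (X i) 0 = 0}"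

definition monvf :: "('n \<Rightarrow>\<^sub>0 nat) \<Rightarrow> 'n \<Rightarrow> ('n, 'k::comm_ring_1) vfield" where
  "monvf k i = (\<lambda>j. if j = i then Poly_Mapping.single k 1 else 0)"

text \<open>A-linear representation of L_+ on A \<otimes> U, U = k^'m (basis indexed by the
  finite type 'm), so that A \<otimes> U = ('m => A).  rho X is an A-linear endomorphism;
  rho is k-linear on L_+ and preserves brackets.\<close>
definition A_linear_rep ::
  "(('n::finite, 'k::comm_ring_1) vfield \<Rightarrow> ('m \<Rightarrow> ('n, 'k) mpoly) \<Rightarrow> ('m \<Rightarrow> ('n, 'k) mpoly)) \<Rightarrow> bool" where
  "A_linear_rep \<rho> \<longleftrightarrow>
     (\<forall>X\<in>Lplus. \<forall>v w. \<rho> X (\<lambda>j. v j + w j) = (\<lambda>j. \<rho> X v j + \<rho> X w j)) \<and>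
     (\<forall>X\<in>Lplus. \<forall>a v. \<rho> X (\<lambda>j. a * v j) = (\<lambda>j. a * \<rho> X v j)) \<and>
     (\<forall>X\<in>Lplus. \<forall>Y\<in>Lplus. \<forall>c d. \<rho> (\<lambda>i. mconst c * X i + mconst d * Y i)
          = (\<lambda>v j. mconst c * \<rho> X v j + mconst d * \<rho> Y v j)) \<and>
     (\<forall>X\<in>Lplus. \<forall>Y\<in>Lplus. \<rho> (vf_bracket X Y)
          = (\<lambda>v j. \<rho> X (\<rho> Y v) j - \<rho> Y (\<rho> X v) j))"

end

theory Submission
  imports Defs "Jordan_Normal_Form.Char_Poly"
begin


lemma sum_pair_split:
  fixes f :: "'m::finite \<times> 'm \<Rightarrow> 'k::comm_ring_1"
  shows "(\<Sum>q\<in>UNIV. f q) = (\<Sum>t\<in>UNIV. \<Sum>s\<in>UNIV. f (t,s))"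
  by (simp add: UNIV_Times_UNIV[symmetric] sum.cartesian_product del: UNIV_Times_UNIV)

lemma ad_eigen_finite:
  fixes M0 :: "'m::finite \<Rightarrow> 'm \<Rightarrow> 'k::field"
  shows "finite {c. \<exists>N. N \<noteq> (\<lambda>j l. 0) \<and>
     (\<forall>j l. c * N j l = (\<Sum>t\<in>UNIV. M0 j t * N t l) - (\<Sum>t\<in>UNIV. N j t * M0 t l))}"
proof -
  define d where "d = card (UNIV :: ('m \<times> 'm) set)"
  obtain h where h: "bij_betw h {0..<d} (UNIV :: ('m \<times> 'm) set)"
    using ex_bij_betw_nat_finite[of "UNIV :: ('m \<times> 'm) set"] unfolding d_def by auto
  define Lf :: "'m \<times> 'm \<Rightarrow> 'm \<times> 'm \<Rightarrow> 'k" where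
    "Lf = (\<lambda>(j,l) (t,s). (if s = l then M0 j t else 0) - (if t = j then M0 s l else 0))"
  define L where "L = mat d d (\<lambda>(a,b). Lf (h a) (h b))"
  have Lc: "L \<in> carrier_mat d d" unfolding L_def by simp
  have cp: "char_poly L \<noteq> 0"
    using degree_monic_char_poly[OF Lc] by auto
  have "{c. \<exists>N. N \<noteq> (\<lambda>j l. 0) \<and>
     (\<forall>j l. c * N j l = (\<Sum>t\<in>UNIV. M0 j t * N t l) - (\<Sum>t\<in>UNIV. N j t * M0 t l))}
     \<subseteq> {x. poly (char_poly L) x = 0}"
  proof
    fix c assume "c \<in> {c. \<exists>N. N \<noteq> (\<lambda>j l. 0) \<and>
     (\<forall>j l. c * N j l = (\<Sum>t\<in>UNIV. M0 j t * N t l) - (\<Sum>t\<in>UNIV. N j t * M0 t l))}"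
    then obtain N where N0: "N \<noteq> (\<lambda>j l. 0)" and Ne: "\<And>j l. c * N j l = (\<Sum>t\<in>UNIV. M0 j t * N t l) - (\<Sum>t\<in>UNIV. N j t * M0 t l)"
      by auto
    define vN where "vN = (\<lambda>(t,s). N t s)"
    define v where "v = vec d (\<lambda>a. vN (h a))"
    have vc: "v \<in> carrier_vec d" unfolding v_def by simp
    obtain j0 l0 where jl0: "N j0 l0 \<noteq> 0" using N0 by (meson ext)
    obtain a0 where a0: "a0 < d" "h a0 = (j0, l0)"
      using h unfolding bij_betw_def by (metis UNIV_I atLeastLessThan_iff imageE)
    have v0: "v \<noteq> 0\<^sub>v d"
    proof
      assume "v = 0\<^sub>v d"
      then have "v $ a0 = 0" using a0 by simp
      then show False using a0 jl0 unfolding v_def vN_def by simp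
    qed
    have Lv: "L *\<^sub>v v = c \<cdot>\<^sub>v v"
    proof (rule eq_vecI)
      fix a assume a: "a < dim_vec (c \<cdot>\<^sub>v v)"
      then have ad: "a < d" unfolding v_def by simp
      obtain j l where hjl: "h a = (j,l)" by fastforce
      have "(L *\<^sub>v v) $ a = (\<Sum>b\<in>{0..<d}. Lf (h a) (h b) * vN (h b))"
        using ad unfolding L_def v_def by (simp add: scalar_prod_def)
      also have "\<dots> = (\<Sum>q\<in>UNIV. Lf (h a) q * vN q)"
        using sum.reindex_bij_betw[OF h, of "\<lambda>q. Lf (h a) q * vN q"] by simp
      also have "\<dots> = (\<Sum>t\<in>UNIV. \<Sum>s\<in>UNIV. Lf (j,l) (t,s) * N t s)"
        by (subst sum_pair_split) (simp add: hjl vN_def)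
      also have "\<dots> = (\<Sum>t\<in>UNIV. \<Sum>s\<in>UNIV. (if s = l then M0 j t * N t s else 0) - (if t = j then N t s * M0 s l else 0))"
        unfolding Lf_def by (intro sum.cong refl) (auto simp: algebra_simps)
      also have "\<dots> = (\<Sum>t\<in>UNIV. M0 j t * N t l) - (\<Sum>s\<in>UNIV. N j s * M0 s l)"
        apply (simp add: sum_subtractf)
        apply (subst sum.swap[of _ UNIV UNIV])
        apply simp
        done
      also have "\<dots> = c * N j l" using Ne by simp
      finally show "(L *\<^sub>v v) $ a = (c \<cdot>\<^sub>v v) $ a"
        using ad hjl unfolding v_def vN_def by simp
    next
      show "dim_vec (L *\<^sub>v v) = dim_vec (c \<cdot>\<^sub>v v)" unfolding L_def v_def by simp
    qed
    have "eigenvalue L c" unfolding eigenvalue_def eigenvector_def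
      using vc v0 Lv Lc by auto
    then show "c \<in> {x. poly (char_poly L) x = 0}"
      using eigenvalue_root_char_poly[OF Lc] by simp
  qed
  then show ?thesis using poly_roots_finite[OF cp] finite_subset by blast
qed



definition tdeg :: "('n::finite \<Rightarrow>\<^sub>0 nat) \<Rightarrow> nat" where
  "tdeg a = (\<Sum>j\<in>UNIV. Poly_Mapping.lookup a j)"

lemma tdeg_add: "tdeg (a + b) = tdeg a + tdeg b"
  unfolding tdeg_def by (simp add: lookup_add sum.distrib)

lemma tdeg_pos: "a \<noteq> 0 \<Longrightarrow> tdeg a > 0"
proof -
  assume "a \<noteq> 0"
  then obtain j where "Poly_Mapping.lookup a j \<noteq> 0"
    by (metis lookup_zero poly_mapping_eqI)
  then show ?thesis unfolding tdeg_def
    by (metis (no_types, lifting) UNIV_I finite_class.finite_UNIV gr0I sum_eq_0_iff)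
qed

lemma lookup_const_mult:
  "Poly_Mapping.lookup (Poly_Mapping.single 0 c * p) \<alpha> = c * Poly_Mapping.lookup p \<alpha>"
  by (simp add: mult_map_scale_conv_mult[symmetric] Poly_Mapping.map.rep_eq when_def)

lemma coeff_mult_low:
  fixes p q :: "('n::finite, 'k::comm_ring_1) mpoly"
  assumes "\<forall>\<gamma>\<in>Poly_Mapping.keys q. tdeg \<alpha> \<le> tdeg \<gamma>"
  shows "Poly_Mapping.lookup (p * q) \<alpha> = Poly_Mapping.lookup p 0 * Poly_Mapping.lookup q \<alpha>"
proof -
  define c where "c = Poly_Mapping.lookup p 0"
  define r where "r = p - Poly_Mapping.single 0 c"
  have p: "p = Poly_Mapping.single 0 c + r" unfolding r_def by simp
  have r0: "0 \<notin> Poly_Mapping.keys r"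
    unfolding r_def c_def by (simp add: in_keys_iff lookup_minus)
  have "Poly_Mapping.lookup (r * q) \<alpha> = 0"
  proof (rule ccontr)
    assume "Poly_Mapping.lookup (r * q) \<alpha> \<noteq> 0"
    then have "\<alpha> \<in> Poly_Mapping.keys (r * q)" by (simp add: in_keys_iff)
    then obtain a b where ab: "\<alpha> = a + b" "a \<in> Poly_Mapping.keys r" "b \<in> Poly_Mapping.keys q"
      using keys_mult by blast
    have "a \<noteq> 0" using ab r0 by auto
    then have "tdeg a > 0" by (rule tdeg_pos)
    then have "tdeg \<alpha> > tdeg b" using ab by (simp add: tdeg_add)
    then show False using assms ab by force
  qed
  moreover have "p * q = Poly_Mapping.single 0 c * q + r * q"
    by (subst p) (simp add: distrib_right)
  ultimately show ?thesis
    by (simp add: lookup_add lookup_const_mult c_def)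
qed

lemma pderiv_var_zero: "pderiv_var i 0 = 0"
  unfolding pderiv_var_def by simp

lemma pderiv_var_single:
  "pderiv_var i (Poly_Mapping.single m (1::'k::comm_ring_1)) =
     Poly_Mapping.single (m - Poly_Mapping.single i 1) (of_nat (Poly_Mapping.lookup m i))"
  unfolding pderiv_var_def by simp

lemma single_sum:
  "finite S \<Longrightarrow> Poly_Mapping.single k (\<Sum>l\<in>S. f l) = (\<Sum>l\<in>S. Poly_Mapping.single k (f l))"
  by (induction S rule: finite_induct) (simp_all add: single_add)

lemma shift_mon:
  "Poly_Mapping.single (Poly_Mapping.single l 1) (1::'k::comm_ring_1) *
     Poly_Mapping.single (k - Poly_Mapping.single l 1) (of_nat (Poly_Mapping.lookup k l))
   = Poly_Mapping.single k (of_nat (Poly_Mapping.lookup k l))"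
proof (cases "Poly_Mapping.lookup k l = 0")
  case True then show ?thesis by simp
next
  case False
  have "Poly_Mapping.single l 1 + (k - Poly_Mapping.single l 1) = k"
    by (rule poly_mapping_eqI) (use False in \<open>auto simp: lookup_add lookup_minus lookup_single when_def\<close>)
  then show ?thesis by (simp add: mult_single)
qed

definition euler :: "('n::finite, 'k::comm_ring_1) vfield" where
  "euler = (\<lambda>j. Poly_Mapping.single (Poly_Mapping.single j 1) 1)"

lemma single_one_nz: "Poly_Mapping.single j (1::nat) \<noteq> 0"
  by (metis lookup_single_eq lookup_zero one_neq_zero)

lemma euler_Lplus: "(euler :: ('n::finite, 'k::comm_ring_1) vfield) \<in> Lplus"
  unfolding euler_def Lplus_def
proof (intro CollectI allI)
  fix i :: 'n
  show "Poly_Mapping.lookup (Poly_Mapping.single (Poly_Mapping.single i (1::nat)) (1::'k)) 0 = 0"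
    by (rule lookup_single_not_eq) (metis lookup_single_eq lookup_zero one_neq_zero)
qed

lemma monvf_Lplus: "k \<noteq> 0 \<Longrightarrow> monvf k i \<in> Lplus"
  unfolding monvf_def Lplus_def by (simp add: lookup_single when_def)

lemma pderiv_euler:
  "pderiv_var l (euler j :: ('n::finite, 'k::comm_ring_1) mpoly) = (if l = j then 1 else 0)"
  unfolding euler_def pderiv_var_single
  by (auto simp: lookup_single when_def)

lemma bracket_euler:
  fixes k :: "'n::finite \<Rightarrow>\<^sub>0 nat"
  shows "vf_bracket (euler :: ('n, 'k::comm_ring_1) vfield) (monvf k i) =
    (\<lambda>j. mconst (of_nat (tdeg k) - 1) * monvf k i j)"
proof
  fix j
  have s2: "(\<Sum>l\<in>UNIV. monvf k i l * pderiv_var l (euler j :: ('n, 'k) mpoly)) =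
     (if j = i then Poly_Mapping.single k 1 else 0)"
  proof -
    have eq: "(\<lambda>l. monvf k i l * pderiv_var l (euler j :: ('n, 'k) mpoly)) =
       (\<lambda>l. if l = i \<and> l = j then Poly_Mapping.single k 1 else 0)"
      by (auto simp: monvf_def pderiv_euler)
    show ?thesis unfolding eq by (cases "i = j") (auto intro!: sum.neutral)
  qed
  show "vf_bracket (euler :: ('n, 'k) vfield) (monvf k i) j = mconst (of_nat (tdeg k) - 1) * monvf k i j"
  proof (cases "j = i")
    case True
    have s1: "(\<Sum>l\<in>UNIV. euler l * pderiv_var l (monvf k i j)) =
        (Poly_Mapping.single k (of_nat (tdeg k)) :: ('n, 'k) mpoly)"
    proof -
      have "(\<Sum>l\<in>UNIV. euler l * pderiv_var l (monvf k i j)) =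
         (\<Sum>l\<in>UNIV. Poly_Mapping.single (Poly_Mapping.single l 1) (1::'k) *
            Poly_Mapping.single (k - Poly_Mapping.single l 1) (of_nat (Poly_Mapping.lookup k l)))"
        by (simp only: monvf_def euler_def True if_True simp_thms pderiv_var_single)
      also have "\<dots> = (\<Sum>l\<in>UNIV. Poly_Mapping.single k (of_nat (Poly_Mapping.lookup k l)))"
        by (simp only: shift_mon)
      also have "\<dots> = Poly_Mapping.single k (of_nat (tdeg k))"
        by (simp add: single_sum tdeg_def)
      finally show ?thesis .
    qed
    have "vf_bracket (euler :: ('n, 'k) vfield) (monvf k i) j = (\<Sum>l\<in>UNIV. euler l * pderiv_var l (monvf k i j)) -
       (\<Sum>l\<in>UNIV. monvf k i l * pderiv_var l (euler j :: ('n, 'k) mpoly))"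
      by (simp add: vf_bracket_def sum_subtractf)
    also have "\<dots> = Poly_Mapping.single k (of_nat (tdeg k)) - Poly_Mapping.single k 1"
      unfolding s1 s2 using True by simp
    also have "\<dots> = mconst (of_nat (tdeg k) - 1) * monvf k i j"
    proof -
      have m: "monvf k i j = (Poly_Mapping.single k 1 :: ('n, 'k) mpoly)" using True by (simp add: monvf_def)
      show ?thesis unfolding m
        by (simp only: mconst_def single_diff left_diff_distrib mult_single add_0 mult_1_right)
    qed
    finally show ?thesis .
  next
    case False
    have "vf_bracket (euler :: ('n, 'k) vfield) (monvf k i) j = (\<Sum>l\<in>UNIV. euler l * pderiv_var l (monvf k i j)) -
       (\<Sum>l\<in>UNIV. monvf k i l * pderiv_var l (euler j :: ('n, 'k) mpoly))"
      by (simp add: vf_bracket_def sum_subtractf)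
    also have "\<dots> = 0"
      unfolding s2 using False by (simp add: monvf_def pderiv_var_zero)
    also have "\<dots> = mconst (of_nat (tdeg k) - 1) * monvf k i j"
      using False by (simp add: monvf_def)
    finally show ?thesis .
  qed
qed


definition ebasis :: "'m \<Rightarrow> 'm \<Rightarrow> ('n, 'k::comm_ring_1) mpoly" where
  "ebasis l = (\<lambda>t. if t = l then 1 else 0)"

lemma rep_zero:
  fixes \<rho> :: "('n::finite, 'k::comm_ring_1) vfield \<Rightarrow> ('m::finite \<Rightarrow> ('n, 'k) mpoly) \<Rightarrow> ('m \<Rightarrow> ('n, 'k) mpoly)"
  assumes "A_linear_rep \<rho>" "Y \<in> Lplus"
  shows "\<rho> Y (\<lambda>j. 0) = (\<lambda>j. 0)"
proof -
  have sc: "\<forall>a v. \<rho> Y (\<lambda>j. a * v j) = (\<lambda>j. a * \<rho> Y v j)"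
    using assms unfolding A_linear_rep_def by blast
  have "\<rho> Y (\<lambda>j. 0 * (\<lambda>j. 0::('n, 'k) mpoly) j) = (\<lambda>j. 0 * \<rho> Y (\<lambda>j. 0) j)"
    by (rule sc[rule_format])
  then show ?thesis by simp
qed

lemma rep_sum:
  fixes \<rho> :: "('n::finite, 'k::comm_ring_1) vfield \<Rightarrow> ('m::finite \<Rightarrow> ('n, 'k) mpoly) \<Rightarrow> ('m \<Rightarrow> ('n, 'k) mpoly)"
  assumes "A_linear_rep \<rho>" "Y \<in> Lplus" "finite S"
  shows "\<rho> Y (\<lambda>j. \<Sum>l\<in>S. f l j) = (\<lambda>j. \<Sum>l\<in>S. \<rho> Y (f l) j)"
  using assms(3)
proof (induction S rule: finite_induct)
  case empty
  then show ?case using rep_zero[OF assms(1,2)] by simp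
next
  case (insert x F)
  have "\<rho> Y (\<lambda>j. \<Sum>l\<in>insert x F. f l j) = \<rho> Y (\<lambda>j. f x j + (\<Sum>l\<in>F. f l j))"
    using insert by simp
  also have "\<dots> = (\<lambda>j. \<rho> Y (f x) j + \<rho> Y (\<lambda>j. \<Sum>l\<in>F. f l j) j)"
  proof -
    have add: "\<forall>v w. \<rho> Y (\<lambda>j. v j + w j) = (\<lambda>j. \<rho> Y v j + \<rho> Y w j)"
      using assms(1,2) unfolding A_linear_rep_def by blast
    show ?thesis by (simp add: add)
  qed
  also have "\<dots> = (\<lambda>j. \<Sum>l\<in>insert x F. \<rho> Y (f l) j)"
    using insert by simp
  finally show ?case .
qed

lemma rep_matrix:
  fixes \<rho> :: "('n::finite, 'k::comm_ring_1) vfield \<Rightarrow> ('m::finite \<Rightarrow> ('n, 'k) mpoly) \<Rightarrow> ('m \<Rightarrow> ('n, 'k) mpoly)"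
  assumes "A_linear_rep \<rho>" "Y \<in> Lplus"
  shows "\<rho> Y v j = (\<Sum>l\<in>UNIV. \<rho> Y (ebasis l) j * v l)"
proof -
  have v: "v = (\<lambda>j. \<Sum>l\<in>UNIV. v l * ebasis l j)"
    by (auto simp: ebasis_def if_distrib cong: if_cong)
  have "\<rho> Y v = (\<lambda>j. \<Sum>l\<in>UNIV. \<rho> Y (\<lambda>t. v l * ebasis l t) j)"
    by (subst v) (rule rep_sum[OF assms], simp)
  also have "\<dots> = (\<lambda>j. \<Sum>l\<in>UNIV. v l * \<rho> Y (ebasis l) j)"
  proof -
    have "\<And>l. \<rho> Y (\<lambda>t. v l * ebasis l t) = (\<lambda>j. v l * \<rho> Y (ebasis l) j)"
      using assms unfolding A_linear_rep_def by blast
    then show ?thesis by simp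
  qed
  finally show ?thesis by (simp add: mult.commute)
qed



lemma rep_brk:
  fixes \<rho> :: "('n::finite, 'k::comm_ring_1) vfield \<Rightarrow> ('m::finite \<Rightarrow> ('n, 'k) mpoly) \<Rightarrow> ('m \<Rightarrow> ('n, 'k) mpoly)"
  assumes "A_linear_rep \<rho>" "X \<in> Lplus" "Y \<in> Lplus"
  shows "\<rho> (vf_bracket X Y) = (\<lambda>v j. \<rho> X (\<rho> Y v) j - \<rho> Y (\<rho> X v) j)"
  using assms unfolding A_linear_rep_def by auto

lemma rep_lin:
  fixes \<rho> :: "('n::finite, 'k::comm_ring_1) vfield \<Rightarrow> ('m::finite \<Rightarrow> ('n, 'k) mpoly) \<Rightarrow> ('m \<Rightarrow> ('n, 'k) mpoly)"
  assumes "A_linear_rep \<rho>" "X \<in> Lplus" "Y \<in> Lplus"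
  shows "\<rho> (\<lambda>i. mconst c * X i + mconst d * Y i) = (\<lambda>v j. mconst c * \<rho> X v j + mconst d * \<rho> Y v j)"
  using assms unfolding A_linear_rep_def by auto

lemma key:
  fixes \<rho> :: "('n::finite, 'k::field_char_0) vfield \<Rightarrow> ('m::finite \<Rightarrow> ('n, 'k) mpoly) \<Rightarrow> ('m \<Rightarrow> ('n, 'k) mpoly)"
  assumes rep: "A_linear_rep \<rho>" and k0: "k \<noteq> 0" and nz: "\<rho> (monvf k i) \<noteq> (\<lambda>v j. 0)"
  shows "of_nat (tdeg k) - 1 \<in> {c. \<exists>N. N \<noteq> (\<lambda>j l. 0) \<and>
     (\<forall>j l. c * N j l = (\<Sum>t\<in>UNIV. (\<lambda>j t. Poly_Mapping.lookup (\<rho> euler (ebasis t) j) 0) j t * N t l) -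
        (\<Sum>t\<in>UNIV. N j t * (\<lambda>j t. Poly_Mapping.lookup (\<rho> euler (ebasis t) j) 0) t l))}"
proof -
  define X :: "('n, 'k) vfield" where "X = monvf k i"
  define c :: 'k where "c = of_nat (tdeg k) - 1"
  have XL: "X \<in> Lplus" unfolding X_def using k0 by (rule monvf_Lplus)
  have EL: "(euler :: ('n, 'k) vfield) \<in> Lplus" by (rule euler_Lplus)
  define M where "M = (\<lambda>j t. \<rho> euler (ebasis t) j)"
  define N where "N = (\<lambda>j t. \<rho> X (ebasis t) j)"
  have hom: "\<rho> (vf_bracket euler X) = (\<lambda>v j. \<rho> euler (\<rho> X v) j - \<rho> X (\<rho> euler v) j)"
    by (rule rep_brk[OF rep EL XL])
  have lin: "\<rho> (\<lambda>i. mconst c * X i + mconst 0 * X i) = (\<lambda>v j. mconst c * \<rho> X v j + mconst 0 * \<rho> X v j)"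
    by (rule rep_lin[OF rep XL XL])
  have m0: "mconst 0 = (0 :: ('n, 'k) mpoly)" unfolding mconst_def by simp
  have br: "vf_bracket euler X = (\<lambda>i. mconst c * X i + mconst 0 * X i)"
    unfolding X_def c_def bracket_euler m0 by simp
  have lin': "\<rho> (\<lambda>i. mconst c * X i) = (\<lambda>v j. mconst c * \<rho> X v j)"
    using lin by (simp add: m0)
  have br': "vf_bracket euler X = (\<lambda>i. mconst c * X i)"
    using br by (simp add: m0)
  have eq: "\<And>v j. mconst c * \<rho> X v j = \<rho> euler (\<rho> X v) j - \<rho> X (\<rho> euler v) j"
  proof -
    fix v j
    have "\<rho> (vf_bracket euler X) v j = \<rho> (\<lambda>i. mconst c * X i) v j" using br' by simp
    then show "mconst c * \<rho> X v j = \<rho> euler (\<rho> X v) j - \<rho> X (\<rho> euler v) j"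
      unfolding hom lin' by simp
  qed
  have eqN: "\<And>j l. mconst c * N j l = (\<Sum>t\<in>UNIV. M j t * N t l) - (\<Sum>t\<in>UNIV. N j t * M t l)"
  proof -
    fix j l
    have "mconst c * N j l = \<rho> euler (\<rho> X (ebasis l)) j - \<rho> X (\<rho> euler (ebasis l)) j"
      unfolding N_def by (rule eq)
    also have "\<dots> = (\<Sum>t\<in>UNIV. M j t * N t l) - (\<Sum>t\<in>UNIV. N j t * M t l)"
      unfolding M_def N_def rep_matrix[OF rep EL, of "\<rho> X (ebasis l)"] rep_matrix[OF rep XL, of "\<rho> euler (ebasis l)"]
      by simp
    finally show "mconst c * N j l = (\<Sum>t\<in>UNIV. M j t * N t l) - (\<Sum>t\<in>UNIV. N j t * M t l)" .
  qed
  have "\<exists>j l. N j l \<noteq> 0"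
  proof (rule ccontr)
    assume "\<not> (\<exists>j l. N j l \<noteq> 0)"
    then have N0: "\<And>j l. N j l = 0" by simp
    have "\<And>v j. \<rho> X v j = 0"
    proof -
      fix v j
      have "\<rho> X v j = (\<Sum>l\<in>UNIV. N j l * v l)" unfolding N_def by (rule rep_matrix[OF rep XL])
      then show "\<rho> X v j = 0" by (simp add: N0)
    qed
    then have "\<rho> X = (\<lambda>v j. 0)" by (intro ext) simp
    then show False using nz unfolding X_def by simp
  qed
  then obtain j1 l1 \<alpha>1 where "\<alpha>1 \<in> Poly_Mapping.keys (N j1 l1)"
    by (metis in_keys_iff lookup_zero poly_mapping_eqI)
  then obtain \<alpha> where \<alpha>: "\<exists>j l. \<alpha> \<in> Poly_Mapping.keys (N j l)"
    and \<alpha>min: "\<And>\<beta>. (\<exists>j l. \<beta> \<in> Poly_Mapping.keys (N j l)) \<Longrightarrow> tdeg \<alpha> \<le> tdeg \<beta>"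
    using ex_has_least_nat[of "\<lambda>\<beta>. \<exists>j l. \<beta> \<in> Poly_Mapping.keys (N j l)" \<alpha>1 tdeg] by blast
  define Na where "Na = (\<lambda>j l. Poly_Mapping.lookup (N j l) \<alpha>)"
  define M0 where "M0 = (\<lambda>j t. Poly_Mapping.lookup (M j t) 0)"
  have NaE: "\<And>j l. c * Na j l = (\<Sum>t\<in>UNIV. M0 j t * Na t l) - (\<Sum>t\<in>UNIV. Na j t * M0 t l)"
  proof -
    fix j l
    have low: "\<And>t l. \<forall>\<gamma>\<in>Poly_Mapping.keys (N t l). tdeg \<alpha> \<le> tdeg \<gamma>" using \<alpha>min by blast
    have "c * Na j l = Poly_Mapping.lookup (mconst c * N j l) \<alpha>"
      unfolding Na_def mconst_def lookup_const_mult ..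
    also have "\<dots> = (\<Sum>t\<in>UNIV. Poly_Mapping.lookup (M j t * N t l) \<alpha>) - (\<Sum>t\<in>UNIV. Poly_Mapping.lookup (M t l * N j t) \<alpha>)"
      unfolding eqN by (simp add: lookup_minus lookup_sum mult.commute)
    also have "\<dots> = (\<Sum>t\<in>UNIV. M0 j t * Na t l) - (\<Sum>t\<in>UNIV. Na j t * M0 t l)"
      unfolding M0_def Na_def coeff_mult_low[OF low] by (simp add: mult.commute)
    finally show "c * Na j l = (\<Sum>t\<in>UNIV. M0 j t * Na t l) - (\<Sum>t\<in>UNIV. Na j t * M0 t l)" .
  qed
  have "Na \<noteq> (\<lambda>j l. 0)"
  proof
    assume "Na = (\<lambda>j l. 0)"
    then show False using \<alpha> unfolding Na_def by (metis in_keys_iff)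
  qed
  then show ?thesis unfolding mem_Collect_eq
    by (intro exI[of _ Na] conjI allI) (use NaE in \<open>simp_all add: c_def M0_def M_def\<close>)
qed



lemma finite_tdeg_bounded:
  assumes "finite T"
  shows "finite {k :: 'n::finite \<Rightarrow>\<^sub>0 nat. tdeg k \<in> T}"
proof -
  define B where "B = Max T"
  have sub: "{k :: 'n \<Rightarrow>\<^sub>0 nat. tdeg k \<in> T} \<subseteq> {k. \<forall>j. Poly_Mapping.lookup k j \<le> B}"
  proof (intro subsetI CollectI allI)
    fix k j assume "k \<in> {k :: 'n \<Rightarrow>\<^sub>0 nat. tdeg k \<in> T}"
    then have "tdeg k \<le> B" unfolding B_def using assms by simp
    moreover have "Poly_Mapping.lookup k j \<le> tdeg k"
      unfolding tdeg_def by (rule member_le_sum) auto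
    ultimately show "Poly_Mapping.lookup k j \<le> B" by simp
  qed
  have "Poly_Mapping.lookup ` {k :: 'n \<Rightarrow>\<^sub>0 nat. \<forall>j. Poly_Mapping.lookup k j \<le> B} \<subseteq> PiE UNIV (\<lambda>_. {..B})"
    by (auto simp: PiE_def extensional_def)
  then have "finite (Poly_Mapping.lookup ` {k :: 'n \<Rightarrow>\<^sub>0 nat. \<forall>j. Poly_Mapping.lookup k j \<le> B})"
    by (rule finite_subset) (simp add: finite_PiE)
  then have "finite {k :: 'n \<Rightarrow>\<^sub>0 nat. \<forall>j. Poly_Mapping.lookup k j \<le> B}"
    by (rule finite_imageD) (simp add: inj_on_def)
  then show ?thesis using sub finite_subset by blast
qed

theorem lemma5p2:
  fixes \<rho> :: "('n::finite, 'k::field_char_0) vfield \<Rightarrow> ('m::finite \<Rightarrow> ('n, 'k) mpoly) \<Rightarrow> ('m \<Rightarrow> ('n, 'k) mpoly)"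
  assumes "alg_closed_field TYPE('k)"
    and "A_linear_rep \<rho>"
  shows "\<forall>i. finite {k. k \<noteq> 0 \<and> \<rho> (monvf k i) \<noteq> (\<lambda>v j. 0)}"
proof
  fix i
  define M0 where "M0 = (\<lambda>j t. Poly_Mapping.lookup (\<rho> euler (ebasis t) j) 0 :: 'k)"
  define \<Lambda> where "\<Lambda> = {c. \<exists>N. N \<noteq> (\<lambda>j l. 0) \<and>
     (\<forall>j l. c * N j l = (\<Sum>t\<in>UNIV. M0 j t * N t l) - (\<Sum>t\<in>UNIV. N j t * M0 t l))}"
  have fin: "finite \<Lambda>" unfolding \<Lambda>_def by (rule ad_eigen_finite)
  define T where "T = (\<lambda>n. of_nat n - (1::'k)) -` \<Lambda>"
  have finT: "finite T" unfolding T_def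
    by (rule finite_vimageI[OF fin]) (simp add: inj_on_def)
  have "{k. k \<noteq> 0 \<and> \<rho> (monvf k i) \<noteq> (\<lambda>v j. 0)} \<subseteq> {k. tdeg k \<in> T}"
  proof
    fix k assume "k \<in> {k. k \<noteq> 0 \<and> \<rho> (monvf k i) \<noteq> (\<lambda>v j. 0)}"
    then have "of_nat (tdeg k) - 1 \<in> \<Lambda>"
      unfolding \<Lambda>_def M0_def by (intro key[OF assms(2)]) auto
    then show "k \<in> {k. tdeg k \<in> T}" unfolding T_def by simp
  qed
  then show "finite {k. k \<noteq> 0 \<and> \<rho> (monvf k i) \<noteq> (\<lambda>v j. 0)}"
    using finite_tdeg_bounded[OF finT] finite_subset by blast
qed



end
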